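(* Let $\Omega_2=\{\omega_1,\omega_2\}$ with $\omega_1\neq\omega_2$, and $\mathcal{A}_2=2^{\Omega_2}$. Let $1$ denote the coevent $\omega_1^*\oplus\omega_2^*\oplus\omega_1^*\omega_2^*$ (equivalently, $1(A)=1$ iff $A\neq\emptyset$). A $q$-measure $\mu$ on $\mathcal{A}_2$ actualizes $1$ if and only if $\mu(\{\omega_1\})\neq 0$, $\mu(\{\omega_2\})\neq 0$ and $\mu(\Omega_2)=\max(\mu(\{\omega_1\}),\mu(\{\omega_2\}))$.
   Context: Let $\Omega$ be a finite nonempty set and $\mathcal{A}=2^\Omega$. A coevent is a map $\phi:\mathcal{A}\to\{0,1\}$ with $\phi(\emptyset)=0$. For $\omega\in\Omega$ the evaluation map $\omega^*$ is the coevent with $\omega^*(A)=1$ if $\omega\in A$ and $0$ otherwise. Coevents are combined pointwise: $(\phi\oplus\psi)(A)=\phi(A)+\psi(A) \bmod 2$ and $(\phi\psi)(A)=\phi(A)\psi(A)$. For $f:\Omega\to[0,\infty)$ and a coevent $\phi$, the $q$-integral is $\int f\,d\phi=\int_0^\infty \phi(\{\omega\in\Omega: f(\omega)>\lambda\})\,d\lambda$ (Lebesgue measure in $\lambda$), and for $A\in\mathcal{A}$, $\int_A f\,d\phi=\int f\chi_A\,d\phi$. A $q$-measure is a map $\mu:\mathcal{A}\to[0,\infty)$ such that for all pairwise disjoint $A,B,C\in\mathcal{A}$: $\mu(A\cup B\cup C)=\mu(A\cup B)+\mu(A\cup C)+\mu(B\cup C)-\mu(A)-\mu(B)-\mu(C)$.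 The $q$-measure $\mu$ actualizes $\phi$ if there is a symmetric function $f:\Omega\times\Omega\to(0,\infty)$ such that for all $A\in\mathcal{A}$, $\mu(A)=\int g_A\,d\phi$, where $g_A(\omega')=\int_A f(\cdot,\omega')\,d\phi$ (the $q$-integral over $A$ of $\omega\mapsto f(\omega,\omega')$). *)

theory Defs
  imports "HOL-Analysis.Analysis"
begin

text \<open>Coevents on the power set of a finite carrier Omega are represented as maps
  from sets to nat with values in {0,1}; arithmetic is mod 2.\<close>

definition coevent :: "'a set \<Rightarrow> ('a set \<Rightarrow> nat) \<Rightarrow> bool" where
  "coevent Omega phi \<longleftrightarrow> phi {} = 0 \<and> (\<forall>A. A \<subseteq> Omega \<longrightarrow> phi A \<in> {0, 1})"

definition eval_map :: "'a \<Rightarrow> ('a set \<Rightarrow> nat)" where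
  "eval_map w = (\<lambda>A. if w \<in> A then 1 else 0)"

definition co_plus :: "('a set \<Rightarrow> nat) \<Rightarrow> ('a set \<Rightarrow> nat) \<Rightarrow> ('a set \<Rightarrow> nat)" where
  "co_plus phi psi = (\<lambda>A. (phi A + psi A) mod 2)"

definition co_mult :: "('a set \<Rightarrow> nat) \<Rightarrow> ('a set \<Rightarrow> nat) \<Rightarrow> ('a set \<Rightarrow> nat)" where
  "co_mult phi psi = (\<lambda>A. phi A * psi A)"

definition q_integral :: "'a set \<Rightarrow> ('a set \<Rightarrow> nat) \<Rightarrow> ('a \<Rightarrow> real) \<Rightarrow> real" where
  "q_integral Omega phi f =
     (LINT l:{0..}|lborel. real (phi {w \<in> Omega. f w > l}))"

definition q_integral_on :: "'a set \<Rightarrow> ('a set \<Rightarrow> nat) \<Rightarrow> 'a set \<Rightarrow> ('a \<Rightarrow> real) \<Rightarrow> real" where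
  "q_integral_on Omega phi A f = q_integral Omega phi (\<lambda>w. f w * indicator A w)"

definition q_measure :: "'a set \<Rightarrow> ('a set \<Rightarrow> real) \<Rightarrow> bool" where
  "q_measure Omega mu \<longleftrightarrow>
     (\<forall>A. A \<subseteq> Omega \<longrightarrow> mu A \<ge> 0) \<and>
     (\<forall>A B C. A \<subseteq> Omega \<and> B \<subseteq> Omega \<and> C \<subseteq> Omega \<and>
        A \<inter> B = {} \<and> A \<inter> C = {} \<and> B \<inter> C = {} \<longrightarrow>
        mu (A \<union> B \<union> C) = mu (A \<union> B) + mu (A \<union> C) + mu (B \<union> C) - mu A - mu B - mu C)"

definition actualizes :: "'a set \<Rightarrow> ('a set \<Rightarrow> real) \<Rightarrow> ('a set \<Rightarrow> nat) \<Rightarrow> bool" where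
  "actualizes Omega mu phi \<longleftrightarrow>
     (\<exists>f :: 'a \<Rightarrow> 'a \<Rightarrow> real.
        (\<forall>x\<in>Omega. \<forall>y\<in>Omega. f x y = f y x \<and> f x y > 0) \<and>
        (\<forall>A. A \<subseteq> Omega \<longrightarrow>
           mu A = q_integral Omega phi (\<lambda>w'. q_integral_on Omega phi A (\<lambda>w. f w w'))))"

end

theory Submission
  imports Defs
begin

lemma P_val:
  assumes "w1 \<noteq> w2"
  shows "(co_plus (co_plus (eval_map w1) (eval_map w2)) (co_mult (eval_map w1) (eval_map w2))) A
         = (if w1 \<in> A \<or> w2 \<in> A then 1 else 0)"
  by (auto simp: co_plus_def co_mult_def eval_map_def)

lemma qint:
  assumes "w1 \<noteq> w2"
  shows "q_integral {w1, w2} (co_plus (co_plus (eval_map w1) (eval_map w2)) (co_mult (eval_map w1) (eval_map w2))) f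
         = max 0 (max (f w1) (f w2))"
proof -
  define M where "M = max (f w1) (f w2)"
  have eq: "indicator {0..} l *\<^sub>R real ((co_plus (co_plus (eval_map w1) (eval_map w2)) (co_mult (eval_map w1) (eval_map w2))) {w \<in> {w1, w2}. f w > l})
      = indicator {0..<M} l" for l :: real
    using assms by (auto simp: P_val M_def indicator_def)
  have "q_integral {w1, w2} (co_plus (co_plus (eval_map w1) (eval_map w2)) (co_mult (eval_map w1) (eval_map w2))) f
     = integral\<^sup>L lborel (indicator {0..<M} :: real \<Rightarrow> real)"
    unfolding q_integral_def set_lebesgue_integral_def using eq by simp
  also have "\<dots> = max 0 M" by (cases "0 \<le> M") auto
  finally show ?thesis by (simp add: M_def)
qed

theorem theorem4p3:
  fixes w1 w2 :: 'a and mu :: "'a set \<Rightarrow> real"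
  assumes "w1 \<noteq> w2"
    and "q_measure {w1, w2} mu"
  shows "actualizes {w1, w2} mu
           (co_plus (co_plus (eval_map w1) (eval_map w2)) (co_mult (eval_map w1) (eval_map w2)))
         \<longleftrightarrow> mu {w1} \<noteq> 0 \<and> mu {w2} \<noteq> 0 \<and> mu {w1, w2} = max (mu {w1}) (mu {w2})"
proof -
  note Q = qint[OF assms(1)]
  have mu0: "mu {} = 0"
    proof -
    have "mu ({} \<union> {} \<union> {}) = mu ({} \<union> {}) + mu ({} \<union> {}) + mu ({} \<union> {}) - mu {} - mu {} - mu {}"
      using assms(2) unfolding q_measure_def by blast
    then show ?thesis by simp
  qed
  have nn: "mu {w1} \<ge> 0" "mu {w2} \<ge> 0"
    using assms(2) unfolding q_measure_def by auto
  have gen: "q_integral {w1, w2} (co_plus (co_plus (eval_map w1) (eval_map w2)) (co_mult (eval_map w1) (eval_map w2)))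
          (\<lambda>w'. q_integral_on {w1, w2} (co_plus (co_plus (eval_map w1) (eval_map w2)) (co_mult (eval_map w1) (eval_map w2))) A (\<lambda>w. f w w'))
       = max 0 (max (max 0 (max (f w1 w1 * indicator A w1) (f w2 w1 * indicator A w2)))
                    (max 0 (max (f w1 w2 * indicator A w1) (f w2 w2 * indicator A w2))))" for f A
    unfolding q_integral_on_def Q ..
  show ?thesis
  proof
    assume "actualizes {w1, w2} mu
           (co_plus (co_plus (eval_map w1) (eval_map w2)) (co_mult (eval_map w1) (eval_map w2)))"
    then obtain f where f: "\<forall>x\<in>{w1,w2}. \<forall>y\<in>{w1,w2}. f x y = f y x \<and> f x y > 0"
      and m: "\<And>A. A \<subseteq> {w1,w2} \<Longrightarrow> mu A = q_integral {w1, w2} (co_plus (co_plus (eval_map w1) (eval_map w2)) (co_mult (eval_map w1) (eval_map w2)))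
          (\<lambda>w'. q_integral_on {w1, w2} (co_plus (co_plus (eval_map w1) (eval_map w2)) (co_mult (eval_map w1) (eval_map w2))) A (\<lambda>w. f w w'))"
      unfolding actualizes_def by blast
    have f11: "f w1 w1 > 0" and f22: "f w2 w2 > 0" and f12: "f w1 w2 > 0" and f21: "f w2 w1 = f w1 w2"
      using f by blast+
    have m1: "mu {w1} = max (f w1 w1) (f w1 w2)"
      using m[of "{w1}"] assms(1) f11 f12 f22 unfolding gen by (simp add: indicator_def f21 max_def)
    have m2: "mu {w2} = max (f w2 w1) (f w2 w2)"
      using m[of "{w2}"] assms(1) f11 f12 f22 unfolding gen by (simp add: indicator_def f21 max_def)
    have m3: "mu {w1,w2} = max (max (f w1 w1) (f w2 w1)) (max (f w1 w2) (f w2 w2))"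
      using m[of "{w1,w2}"] assms(1) f11 f12 f22 unfolding gen by (simp add: indicator_def f21 max_def)
    show "mu {w1} \<noteq> 0 \<and> mu {w2} \<noteq> 0 \<and> mu {w1, w2} = max (mu {w1}) (mu {w2})"
      using m1 m2 m3 f11 f12 f22 f21 by (auto simp: max_def)
  next
    assume h: "mu {w1} \<noteq> 0 \<and> mu {w2} \<noteq> 0 \<and> mu {w1, w2} = max (mu {w1}) (mu {w2})"
    define f where "f = (\<lambda>x y. if x = w1 \<and> y = w1 then mu {w1} else if x = w2 \<and> y = w2 then mu {w2}
                       else min (mu {w1}) (mu {w2}))"
    have pos: "mu {w1} > 0" "mu {w2} > 0" using h nn by auto
    have A4: "A \<subseteq> {w1,w2} \<Longrightarrow> A = {} \<or> A = {w1} \<or> A = {w2} \<or> A = {w1,w2}" for A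
      by blast
    show "actualizes {w1, w2} mu
           (co_plus (co_plus (eval_map w1) (eval_map w2)) (co_mult (eval_map w1) (eval_map w2)))"
      unfolding actualizes_def
    proof (intro exI[of _ f] conjI allI impI)
      show "\<forall>x\<in>{w1,w2}. \<forall>y\<in>{w1,w2}. f x y = f y x \<and> f x y > 0"
        using pos assms(1) by (auto simp: f_def)
    next
      fix A assume "A \<subseteq> {w1,w2}"
      then consider "A = {}" | "A = {w1}" | "A = {w2}" | "A = {w1,w2}" using A4 by blast
      then show "mu A = q_integral {w1, w2} (co_plus (co_plus (eval_map w1) (eval_map w2)) (co_mult (eval_map w1) (eval_map w2)))
          (\<lambda>w'. q_integral_on {w1, w2} (co_plus (co_plus (eval_map w1) (eval_map w2)) (co_mult (eval_map w1) (eval_map w2))) A (\<lambda>w. f w w'))"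
      proof cases
        case 1 then show ?thesis using mu0 by (simp add: gen)
      next
        case 2 then show ?thesis using pos assms(1) by (simp add: gen f_def indicator_def max_def min_def)
      next
        case 3 then show ?thesis using pos assms(1) by (simp add: gen f_def indicator_def max_def min_def)
      next
        case 4 then show ?thesis using pos h assms(1) by (simp add: gen f_def indicator_def max_def min_def)
      qed
    qed
  qed
qed

end
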